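(* Let $\alpha$ be a snowy weak composition and $i$ an index with $\alpha_i>\alpha_{i+1}$. Then $\mathsf{rajcode}(s_i\alpha)=s_i\,\mathsf{rajcode}(\alpha)+e_i$, where $s_i$ swaps the $i$-th and $(i+1)$-th entries and $e_i$ is the weak composition with $1$ in entry $i$ and $0$ elsewhere.
   Context: A weak composition is an infinite sequence of nonnegative integers with finitely many positive entries; it is snowy if its positive entries are distinct. $D(\alpha)=\{(r,c):1\le c\le\alpha_r\}$ (row 1 on top). For a diagram $D$, $\mathsf{snow}(D)$ is built by iterating through rows from bottom to top: in row $r$ take the rightmost cell $(r,c)\in D$ such that column $c$ contains no dark cloud yet; if it exists label it a dark cloud and add snowflake cells at $(r',c)$ for all $r'<r$ with $(r',c)\notin D$. $\mathsf{rajcode}(\alpha)_r$ is the number of cells of $\mathsf{snow}(D(\alpha))$ in row $r$. *)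

theory Defs
  imports Main
begin

text \<open>Weak compositions are functions nat \<Rightarrow> nat indexed by the positive integers;
  the (unused) entry at index 0 is required to be 0.\<close>

definition weak_comp :: "(nat \<Rightarrow> nat) \<Rightarrow> bool" where
  "weak_comp \<alpha> \<longleftrightarrow> \<alpha> 0 = 0 \<and> finite {r. \<alpha> r \<noteq> 0}"

definition snowy :: "(nat \<Rightarrow> nat) \<Rightarrow> bool" where
  "snowy \<alpha> \<longleftrightarrow> weak_comp \<alpha> \<and> inj_on \<alpha> {r. 0 < \<alpha> r}"

definition diagram :: "(nat \<Rightarrow> nat) \<Rightarrow> (nat \<times> nat) set" where
  "diagram \<alpha> = {(r, c). 1 \<le> r \<and> 1 \<le> c \<and> c \<le> \<alpha> r}"

text \<open>One step of the snow construction, processing row r.  State: (set of columns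
  already containing a dark cloud, set of snowflake cells added so far).\<close>

definition snow_step ::
  "(nat \<times> nat) set \<Rightarrow> nat \<Rightarrow> nat set \<times> (nat \<times> nat) set \<Rightarrow> nat set \<times> (nat \<times> nat) set" where
  "snow_step D r st =
     (let C = fst st; S = snd st; cand = {c. (r, c) \<in> D \<and> c \<notin> C} in
      if cand = {} then st
      else (let c = Max cand in
            (insert c C, S \<union> {(r', c) | r'. 1 \<le> r' \<and> r' < r \<and> (r', c) \<notin> D})))"

definition snow_state :: "(nat \<times> nat) set \<Rightarrow> nat \<Rightarrow> nat set \<times> (nat \<times> nat) set" where
  "snow_state D N = fold (snow_step D) (rev [1..<Suc N]) ({}, {})"

definition max_row :: "(nat \<times> nat) set \<Rightarrow> nat" where
  "max_row D = (if D = {} then 0 else Max (fst ` D))"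

definition snow :: "(nat \<times> nat) set \<Rightarrow> (nat \<times> nat) set" where
  "snow D = D \<union> snd (snow_state D (max_row D))"

definition rajcode :: "(nat \<Rightarrow> nat) \<Rightarrow> nat \<Rightarrow> nat" where
  "rajcode \<alpha> r = card {c. (r, c) \<in> snow (diagram \<alpha>)}"

definition swap_at :: "nat \<Rightarrow> (nat \<Rightarrow> nat) \<Rightarrow> nat \<Rightarrow> nat" where
  "swap_at i \<alpha> = (\<lambda>r. if r = i then \<alpha> (Suc i) else if r = Suc i then \<alpha> i else \<alpha> r)"

definition unit_vec :: "nat \<Rightarrow> nat \<Rightarrow> nat" where
  "unit_vec i = (\<lambda>r. if r = i then 1 else 0)"

end

theory Submission
  imports Defs
begin

definition Cset :: "(nat \<Rightarrow> nat) \<Rightarrow> nat set \<Rightarrow> nat set" where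
  "Cset \<alpha> A = {\<alpha> s | s. s \<in> A \<and> 0 < \<alpha> s}"

definition Sset :: "(nat \<Rightarrow> nat) \<Rightarrow> nat set \<Rightarrow> (nat \<times> nat) set" where
  "Sset \<alpha> A = {(r', c). \<exists>s. s \<in> A \<and> 0 < \<alpha> s \<and> c = \<alpha> s \<and> 1 \<le> r' \<and> r' < s \<and> \<alpha> r' < c}"

lemma step_inv:
  assumes inj: "inj_on \<alpha> {r. 0 < \<alpha> r}" and a0: "\<alpha> 0 = 0" and rA: "r \<notin> A"
  shows "snow_step (diagram \<alpha>) r (Cset \<alpha> A, Sset \<alpha> A) = (Cset \<alpha> (insert r A), Sset \<alpha> (insert r A))"
proof (cases "0 < \<alpha> r")
  case False
  then have r0: "\<alpha> r = 0" by simp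
  have "{c. (r, c) \<in> diagram \<alpha> \<and> c \<notin> Cset \<alpha> A} = {}"
    using r0 by (auto simp: diagram_def)
  moreover have "Cset \<alpha> (insert r A) = Cset \<alpha> A" using r0 by (auto simp: Cset_def)
  moreover have "Sset \<alpha> (insert r A) = Sset \<alpha> A" using r0 by (auto simp: Sset_def)
  ultimately show ?thesis by (simp add: snow_step_def Let_def)
next
  case True
  then have r1: "1 \<le> r" using a0 by (cases r) auto
  have notin: "\<alpha> r \<notin> Cset \<alpha> A"
  proof
    assume "\<alpha> r \<in> Cset \<alpha> A"
    then obtain s where "s \<in> A" "0 < \<alpha> s" "\<alpha> r = \<alpha> s" by (auto simp: Cset_def)
    with inj True have "r = s" by (auto dest: inj_onD)
    with rA \<open>s \<in> A\<close> show False by simp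
  qed
  let ?cand = "{c. (r, c) \<in> diagram \<alpha> \<and> c \<notin> Cset \<alpha> A}"
  have mem: "\<alpha> r \<in> ?cand" using notin True r1 by (auto simp: diagram_def)
  have fin: "finite ?cand" by (rule finite_subset[of _ "{..\<alpha> r}"]) (auto simp: diagram_def)
  have mx: "Max ?cand = \<alpha> r"
    by (rule Max_eqI[OF fin]) (use mem in \<open>auto simp: diagram_def\<close>)
  have ne: "?cand \<noteq> {}" using mem by blast
  have C: "insert (\<alpha> r) (Cset \<alpha> A) = Cset \<alpha> (insert r A)" using True by (auto simp: Cset_def)
  have S: "Sset \<alpha> A \<union> {(r', \<alpha> r) | r'. 1 \<le> r' \<and> r' < r \<and> (r', \<alpha> r) \<notin> diagram \<alpha>}
      = Sset \<alpha> (insert r A)"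
    using True by (auto simp: Sset_def diagram_def)
  show ?thesis unfolding snow_step_def Let_def prod.sel if_not_P[OF ne] mx C S by (rule refl)
qed

lemma fold_inv:
  assumes inj: "inj_on \<alpha> {r. 0 < \<alpha> r}" and a0: "\<alpha> 0 = 0"
  shows "distinct xs \<Longrightarrow> set xs \<inter> A = {} \<Longrightarrow>
    fold (snow_step (diagram \<alpha>)) xs (Cset \<alpha> A, Sset \<alpha> A) = (Cset \<alpha> (A \<union> set xs), Sset \<alpha> (A \<union> set xs))"
proof (induction xs arbitrary: A)
  case Nil
  then show ?case by simp
next
  case (Cons x xs)
  have "x \<notin> A" using Cons.prems by auto
  then have "snow_step (diagram \<alpha>) x (Cset \<alpha> A, Sset \<alpha> A) = (Cset \<alpha> (insert x A), Sset \<alpha> (insert x A))"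
    using step_inv[OF inj a0] by blast
  moreover have "fold (snow_step (diagram \<alpha>)) xs (Cset \<alpha> (insert x A), Sset \<alpha> (insert x A))
     = (Cset \<alpha> (insert x A \<union> set xs), Sset \<alpha> (insert x A \<union> set xs))"
    using Cons.IH[of "insert x A"] Cons.prems by auto
  ultimately show ?case by simp
qed

lemma rajcode_formula:
  assumes inj: "inj_on \<alpha> {r. 0 < \<alpha> r}" and a0: "\<alpha> 0 = 0" and fs: "finite {r. \<alpha> r \<noteq> 0}"
  shows "rajcode \<alpha> r = (if r = 0 then 0 else \<alpha> r + card {s. r < s \<and> \<alpha> r < \<alpha> s})"
proof -
  let ?D = "diagram \<alpha>"
  let ?M = "max_row ?D"
  have e: "Cset \<alpha> {} = {}" "Sset \<alpha> {} = {}" by (auto simp: Cset_def Sset_def)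
  have ss: "snow_state ?D ?M = (Cset \<alpha> {1..?M}, Sset \<alpha> {1..?M})"
  proof -
    have h: "fold (snow_step ?D) (rev [1..<Suc ?M]) (Cset \<alpha> {}, Sset \<alpha> {})
       = (Cset \<alpha> ({} \<union> set (rev [1..<Suc ?M])), Sset \<alpha> ({} \<union> set (rev [1..<Suc ?M])))"
      by (rule fold_inv[OF inj a0]) simp_all
    have st: "{} \<union> set (rev [1..<Suc ?M]) = {1..?M}" by auto
    show ?thesis using h unfolding snow_state_def st e by simp
  qed
  have fD: "fst ` ?D \<subseteq> {r. \<alpha> r \<noteq> 0}" by (auto simp: diagram_def)
  have bound: "s \<le> ?M" if "0 < \<alpha> s" for s
  proof -
    have s1: "1 \<le> s" using that a0 by (cases s) auto
    have "(s, 1) \<in> ?D" using that s1 by (auto simp: diagram_def)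
    then have "s \<in> fst ` ?D" by force
    moreover have "finite (fst ` ?D)" using finite_subset[OF fD fs] .
    ultimately show ?thesis unfolding max_row_def using Max_ge by auto
  qed
  have rowset: "{c. (r, c) \<in> snow ?D} = {c. (r,c) \<in> ?D} \<union> {c. (r, c) \<in> Sset \<alpha> {1..?M}}"
    unfolding snow_def using ss by auto
  show ?thesis
  proof (cases "r = 0")
    case True
    then show ?thesis unfolding rajcode_def rowset by (simp add: diagram_def Sset_def)
  next
    case False
    have A: "{c. (r,c) \<in> ?D} = {1..\<alpha> r}" using False by (auto simp: diagram_def)
    have B: "{c. (r, c) \<in> Sset \<alpha> {1..?M}} = \<alpha> ` {s. r < s \<and> \<alpha> r < \<alpha> s}"
    proof
      show "{c. (r, c) \<in> Sset \<alpha> {1..?M}} \<subseteq> \<alpha> ` {s. r < s \<and> \<alpha> r < \<alpha> s}"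
        by (auto simp: Sset_def)
      show "\<alpha> ` {s. r < s \<and> \<alpha> r < \<alpha> s} \<subseteq> {c. (r, c) \<in> Sset \<alpha> {1..?M}}"
      proof clarify
        fix s assume "r < s" "\<alpha> r < \<alpha> s"
        then show "(r, \<alpha> s) \<in> Sset \<alpha> {1..?M}"
          unfolding Sset_def using bound[of s] False by (auto intro!: exI[of _ s])
      qed
    qed
    have fin2: "finite {s. r < s \<and> \<alpha> r < \<alpha> s}" by (rule finite_subset[OF _ fs]) auto
    have inj2: "inj_on \<alpha> {s. r < s \<and> \<alpha> r < \<alpha> s}" by (rule inj_on_subset[OF inj]) auto
    have disj: "{1..\<alpha> r} \<inter> \<alpha> ` {s. r < s \<and> \<alpha> r < \<alpha> s} = {}" by auto
    have "card ({1..\<alpha> r} \<union> \<alpha> ` {s. r < s \<and> \<alpha> r < \<alpha> s}) = \<alpha> r + card {s. r < s \<and> \<alpha> r < \<alpha> s}"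
      using card_Un_disjoint[OF _ _ disj] fin2 card_image[OF inj2] by simp
    then show ?thesis unfolding rajcode_def rowset A B using False by simp
  qed
qed

theorem corollary4p19:
  fixes \<alpha> :: "nat \<Rightarrow> nat" and i :: nat
  assumes "snowy \<alpha>" and "1 \<le> i" and "\<alpha> i > \<alpha> (Suc i)"
  shows "rajcode (swap_at i \<alpha>) = (\<lambda>r. swap_at i (rajcode \<alpha>) r + unit_vec i r)"
proof -
  have inj: "inj_on \<alpha> {r. 0 < \<alpha> r}" and a0: "\<alpha> 0 = 0" and fs: "finite {r. \<alpha> r \<noteq> 0}"
    using assms(1) by (auto simp: snowy_def weak_comp_def)
  define t where "t = (\<lambda>x::nat. if x = i then Suc i else if x = Suc i then i else x)"
  define \<beta> where "\<beta> = swap_at i \<alpha>"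
  have bt: "\<beta> x = \<alpha> (t x)" for x by (simp add: \<beta>_def swap_at_def t_def)
  have tt: "t (t x) = x" for x by (simp add: t_def)
  have b0: "\<beta> 0 = 0" using assms(2) a0 by (simp add: bt t_def)
  have bfs: "finite {r. \<beta> r \<noteq> 0}"
    by (rule finite_subset[of _ "{r. \<alpha> r \<noteq> 0} \<union> {i, Suc i}"]) (use fs in \<open>auto simp: bt t_def\<close>)
  have binj: "inj_on \<beta> {r. 0 < \<beta> r}"
  proof (rule inj_onI)
    fix x y assume "x \<in> {r. 0 < \<beta> r}" "y \<in> {r. 0 < \<beta> r}" "\<beta> x = \<beta> y"
    then have "t x = t y" using inj unfolding bt by (auto dest: inj_onD)
    then show "x = y" using tt by metis
  qed
  have img: "{s. P (t s)} = t ` {s. P s}" for P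
    apply (rule set_eqI, rule iffI)
    subgoal for x by (rule image_eqI[of x t "t x"]) (simp_all add: tt)
    subgoal for x by (auto simp: tt)
    done
  have injt: "inj_on t A" for A by (metis inj_onI tt)
  show ?thesis
  proof
    fix r
    show "rajcode (swap_at i \<alpha>) r = swap_at i (rajcode \<alpha>) r + unit_vec i r"
      unfolding \<beta>_def[symmetric]
      unfolding rajcode_formula[OF binj b0 bfs] rajcode_formula[OF inj a0 fs]
    proof -
      consider "r = 0" | "0 < r" "r < i" | "r = i" | "r = Suc i" | "Suc i < r" by linarith
      then show "(if r = 0 then 0 else \<beta> r + card {s. r < s \<and> \<beta> r < \<beta> s}) =
        swap_at i (\<lambda>r. if r = 0 then 0 else \<alpha> r + card {s. r < s \<and> \<alpha> r < \<alpha> s}) r + unit_vec i r"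
      proof cases
        case 1
        then show ?thesis using assms(2) by (simp add: swap_at_def unit_vec_def)
      next
        case 2
        have "{s. r < s \<and> \<beta> r < \<beta> s} = {s. r < t s \<and> \<alpha> r < \<alpha> (t s)}"
          using 2 by (auto simp: bt t_def)
        also have "\<dots> = t ` {s. r < s \<and> \<alpha> r < \<alpha> s}" by (rule img)
        finally have "card {s. r < s \<and> \<beta> r < \<beta> s} = card {s. r < s \<and> \<alpha> r < \<alpha> s}"
          by (simp add: card_image[OF injt])
        then show ?thesis using 2 by (simp add: swap_at_def unit_vec_def bt t_def)
      next
        case 5
        have "{s. r < s \<and> \<beta> r < \<beta> s} = {s. r < t s \<and> \<alpha> r < \<alpha> (t s)}"
          using 5 by (auto simp: bt t_def)
        also have "\<dots> = t ` {s. r < s \<and> \<alpha> r < \<alpha> s}" by (rule img)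
        finally have "card {s. r < s \<and> \<beta> r < \<beta> s} = card {s. r < s \<and> \<alpha> r < \<alpha> s}"
          by (simp add: card_image[OF injt])
        then show ?thesis using 5 by (simp add: swap_at_def unit_vec_def bt t_def)
      next
        case 3
        have fin: "finite {s. Suc i < s \<and> \<alpha> (Suc i) < \<alpha> s}" by (rule finite_subset[OF _ fs]) auto
        have "{s. i < s \<and> \<beta> i < \<beta> s} = insert (Suc i) {s. Suc i < s \<and> \<alpha> (Suc i) < \<alpha> s}"
          using assms(3) by (auto simp: bt t_def)
        then have "card {s. i < s \<and> \<beta> i < \<beta> s} = Suc (card {s. Suc i < s \<and> \<alpha> (Suc i) < \<alpha> s})"
          using fin by simp
        then show ?thesis using 3 assms(2) by (simp add: swap_at_def unit_vec_def bt t_def)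
      next
        case 4
        have "{s. Suc i < s \<and> \<beta> (Suc i) < \<beta> s} = {s. i < s \<and> \<alpha> i < \<alpha> s}"
          using assms(3) by (auto simp: bt t_def)
        then show ?thesis using 4 assms(2) by (simp add: swap_at_def unit_vec_def bt t_def)
      qed
    qed
  qed
qed

end
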